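(* Let $R$ be a ring with identity, ${}_RM$ a left $R$-module, $\varphi:M\to M$ a nilpotent $R$-endomorphism, and $\{x_{\gamma,i}\mid\gamma\in\Gamma,1\le i\le k_\gamma\}$ a nilpotent Jordan normal base of ${}_RM$ with respect to $\varphi$. Define $\Phi:\coprod_{\gamma\in\Gamma}R[t]\to M$ by $\Phi(\mathbf f)=\sum_{\gamma\in\Gamma}f_\gamma(t)\ast x_{\gamma,1}$ for $\mathbf f=(f_\gamma(t))_{\gamma\in\Gamma}$. Then $\Phi$ is a surjective homomorphism of left $R[t]$-modules, $\varphi(\Phi(\mathbf f))=\Phi(t\mathbf f)$ for all $\mathbf f\in\coprod_{\gamma\in\Gamma}R[t]$, and \[\coprod_{\gamma\in\Gamma}\bigl(J(R)[t]+(t^{k_\gamma})\bigr)\subseteq\ker(\Phi),\] where the left-hand side is the set of $\mathbf f$ in the copower with $f_\gamma(t)\in J(R)[t]+(t^{k_\gamma})$ for every $\gamma$; moreover $\ker(\Phi)$ is a left ideal of the direct power ring $\prod_{\gamma\in\Gamma}R[t]$ (i.e. $\mathbf g\mathbf f\in\ker(\Phi)$ for all $\mathbf g\in\prod_{\gamma}R[t]$ and $\mathbf f\in\ker(\Phi)$), and hence of the copower ring.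
   Context: A nilpotent Jordan normal base of ${}_RM$ with respect to $\varphi$ is a subset $\{x_{\gamma,i}\mid\gamma\in\Gamma,1\le i\le k_\gamma\}$ (integers $k_\gamma\ge1$) such that each $Rx_{\gamma,i}$ is simple, $M=\bigoplus_{\gamma,i}Rx_{\gamma,i}$, $\varphi(x_{\gamma,i})=x_{\gamma,i+1}$ for $1\le i<k_\gamma$, $\varphi(x_{\gamma,k_\gamma})=0$, and $\{k_\gamma\}$ is bounded. $R[t]$ is the polynomial ring in a central (commuting) indeterminate $t$; $J(R)$ is the Jacobson radical and $J(R)[t]$ the polynomials with coefficients in $J(R)$; $(t^k)=R[t]t^k$. $M$ is a left $R[t]$-module via $(a_1+a_2t+\cdots+a_{n+1}t^n)\ast u=a_1u+a_2\varphi(u)+\cdots+a_{n+1}\varphi^n(u)$. The copower $\coprod_{\gamma\in\Gamma}R[t]$ is the ideal of the direct power ring $\prod_{\gamma\in\Gamma}R[t]$ consisting of elements with finitely many nonzero coordinates; $R[t]$ acts on both by left multiplication in each coordinate. *)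

theory Defs
  imports Main
begin

text \<open>The module M is the whole type 'm; the scalar action is smul.\<close>

definition left_module :: "('r::ring_1 \<Rightarrow> 'm::ab_group_add \<Rightarrow> 'm) \<Rightarrow> bool" where
  "left_module smul \<longleftrightarrow>
     (\<forall>r a b. smul r (a + b) = smul r a + smul r b) \<and>
     (\<forall>r s a. smul (r + s) a = smul r a + smul s a) \<and>
     (\<forall>r s a. smul (r * s) a = smul r (smul s a)) \<and>
     (\<forall>a. smul 1 a = a)"

definition module_endo :: "('r::ring_1 \<Rightarrow> 'm::ab_group_add \<Rightarrow> 'm) \<Rightarrow> ('m \<Rightarrow> 'm) \<Rightarrow> bool" where
  "module_endo smul \<phi> \<longleftrightarrow>
     (\<forall>a b. \<phi> (a + b) = \<phi> a + \<phi> b) \<and> (\<forall>r a. \<phi> (smul r a) = smul r (\<phi> a))"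

definition nilpotent_map :: "('m::zero \<Rightarrow> 'm) \<Rightarrow> bool" where
  "nilpotent_map \<phi> \<longleftrightarrow> (\<exists>n. \<forall>a. (\<phi> ^^ n) a = 0)"

definition submodule :: "('r::ring_1 \<Rightarrow> 'm::ab_group_add \<Rightarrow> 'm) \<Rightarrow> 'm set \<Rightarrow> bool" where
  "submodule smul N \<longleftrightarrow> 0 \<in> N \<and> (\<forall>a\<in>N. \<forall>b\<in>N. a + b \<in> N) \<and> (\<forall>r. \<forall>a\<in>N. smul r a \<in> N)"

definition cyclic_sub :: "('r::ring_1 \<Rightarrow> 'm::ab_group_add \<Rightarrow> 'm) \<Rightarrow> 'm \<Rightarrow> 'm set" where
  "cyclic_sub smul x = range (\<lambda>r. smul r x)"

definition simple_submodule :: "('r::ring_1 \<Rightarrow> 'm::ab_group_add \<Rightarrow> 'm) \<Rightarrow> 'm set \<Rightarrow> bool" where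
  "simple_submodule smul N \<longleftrightarrow> submodule smul N \<and> N \<noteq> {0} \<and>
     (\<forall>L. submodule smul L \<longrightarrow> L \<subseteq> N \<longrightarrow> L = {0} \<or> L = N)"

definition jidx :: "'g set \<Rightarrow> ('g \<Rightarrow> nat) \<Rightarrow> ('g \<times> nat) set" where
  "jidx \<Gamma> k = {(\<gamma>, i). \<gamma> \<in> \<Gamma> \<and> 1 \<le> i \<and> i \<le> k \<gamma>}"

definition internal_direct_sum ::
  "('r::ring_1 \<Rightarrow> 'm::ab_group_add \<Rightarrow> 'm) \<Rightarrow> 'i set \<Rightarrow> ('i \<Rightarrow> 'm) \<Rightarrow> bool" where
  "internal_direct_sum smul I x \<longleftrightarrow>
     (\<forall>m. \<exists>!y. (\<forall>p. p \<notin> I \<longrightarrow> y p = 0) \<and> finite {p. y p \<noteq> 0} \<and>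
               (\<forall>p\<in>I. y p \<in> cyclic_sub smul (x p)) \<and>
               m = (\<Sum>p\<in>{p. y p \<noteq> 0}. y p))"

definition nilpotent_jordan_base ::
  "('r::ring_1 \<Rightarrow> 'm::ab_group_add \<Rightarrow> 'm) \<Rightarrow> ('m \<Rightarrow> 'm) \<Rightarrow> 'g set \<Rightarrow> ('g \<Rightarrow> nat)
    \<Rightarrow> ('g \<Rightarrow> nat \<Rightarrow> 'm) \<Rightarrow> bool" where
  "nilpotent_jordan_base smul \<phi> \<Gamma> k x \<longleftrightarrow>
     (\<forall>\<gamma>\<in>\<Gamma>. 1 \<le> k \<gamma>) \<and>
     (\<forall>(\<gamma>, i)\<in>jidx \<Gamma> k. simple_submodule smul (cyclic_sub smul (x \<gamma> i))) \<and>
     internal_direct_sum smul (jidx \<Gamma> k) (\<lambda>(\<gamma>, i). x \<gamma> i) \<and>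
     (\<forall>\<gamma>\<in>\<Gamma>. \<forall>i. 1 \<le> i \<and> i < k \<gamma> \<longrightarrow> \<phi> (x \<gamma> i) = x \<gamma> (Suc i)) \<and>
     (\<forall>\<gamma>\<in>\<Gamma>. \<phi> (x \<gamma> (k \<gamma>)) = 0) \<and>
     (\<exists>B. \<forall>\<gamma>\<in>\<Gamma>. k \<gamma> \<le> B)"

definition polys :: "(nat \<Rightarrow> 'r::zero) set" where
  "polys = {f. finite {n. f n \<noteq> 0}}"

definition padd :: "(nat \<Rightarrow> 'r::ring_1) \<Rightarrow> (nat \<Rightarrow> 'r) \<Rightarrow> nat \<Rightarrow> 'r" where
  "padd f g = (\<lambda>n. f n + g n)"

definition pmult :: "(nat \<Rightarrow> 'r::ring_1) \<Rightarrow> (nat \<Rightarrow> 'r) \<Rightarrow> nat \<Rightarrow> 'r" where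
  "pmult f g = (\<lambda>n. \<Sum>i\<le>n. f i * g (n - i))"

definition pmono :: "nat \<Rightarrow> nat \<Rightarrow> 'r::ring_1" where
  "pmono k = (\<lambda>n. if n = k then 1 else 0)"

definition pact :: "('r::ring_1 \<Rightarrow> 'm::ab_group_add \<Rightarrow> 'm) \<Rightarrow> ('m \<Rightarrow> 'm) \<Rightarrow> (nat \<Rightarrow> 'r) \<Rightarrow> 'm \<Rightarrow> 'm" where
  "pact smul \<phi> f u = (\<Sum>n\<in>{n. f n \<noteq> 0}. smul (f n) ((\<phi> ^^ n) u))"

definition left_ideal :: "'r::ring_1 set \<Rightarrow> bool" where
  "left_ideal I \<longleftrightarrow> 0 \<in> I \<and> (\<forall>a\<in>I. \<forall>b\<in>I. a + b \<in> I) \<and> (\<forall>a\<in>I. - a \<in> I) \<and>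
     (\<forall>r. \<forall>a\<in>I. r * a \<in> I)"

definition maximal_left_ideal :: "'r::ring_1 set \<Rightarrow> bool" where
  "maximal_left_ideal I \<longleftrightarrow> left_ideal I \<and> I \<noteq> UNIV \<and>
     (\<forall>L. left_ideal L \<longrightarrow> I \<subseteq> L \<longrightarrow> L = I \<or> L = UNIV)"

definition jacobson :: "'r::ring_1 set" where
  "jacobson = \<Inter> {I. maximal_left_ideal I}"

definition jac_plus_tk :: "nat \<Rightarrow> (nat \<Rightarrow> 'r::ring_1) set" where
  "jac_plus_tk k = {padd a b | a b. a \<in> polys \<and> (\<forall>n. a n \<in> jacobson) \<and>
                                   (\<exists>g\<in>polys. b = pmult g (pmono k))}"

definition dirpower :: "'g set \<Rightarrow> ('g \<Rightarrow> nat \<Rightarrow> 'r::ring_1) set" where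
  "dirpower \<Gamma> = {F. (\<forall>\<gamma>. F \<gamma> \<in> polys) \<and> (\<forall>\<gamma>. \<gamma> \<notin> \<Gamma> \<longrightarrow> F \<gamma> = (\<lambda>_. 0))}"

definition copower :: "'g set \<Rightarrow> ('g \<Rightarrow> nat \<Rightarrow> 'r::ring_1) set" where
  "copower \<Gamma> = {F. F \<in> dirpower \<Gamma> \<and> finite {\<gamma>. F \<gamma> \<noteq> (\<lambda>_. 0)}}"

definition cadd :: "('g \<Rightarrow> nat \<Rightarrow> 'r::ring_1) \<Rightarrow> ('g \<Rightarrow> nat \<Rightarrow> 'r) \<Rightarrow> 'g \<Rightarrow> nat \<Rightarrow> 'r" where
  "cadd F G = (\<lambda>\<gamma>. padd (F \<gamma>) (G \<gamma>))"

definition cmult :: "('g \<Rightarrow> nat \<Rightarrow> 'r::ring_1) \<Rightarrow> ('g \<Rightarrow> nat \<Rightarrow> 'r) \<Rightarrow> 'g \<Rightarrow> nat \<Rightarrow> 'r" where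
  "cmult G F = (\<lambda>\<gamma>. pmult (G \<gamma>) (F \<gamma>))"

definition cscal :: "(nat \<Rightarrow> 'r::ring_1) \<Rightarrow> ('g \<Rightarrow> nat \<Rightarrow> 'r) \<Rightarrow> 'g \<Rightarrow> nat \<Rightarrow> 'r" where
  "cscal h F = (\<lambda>\<gamma>. pmult h (F \<gamma>))"

definition left_ideal_of :: "('g \<Rightarrow> nat \<Rightarrow> 'r::ring_1) set \<Rightarrow> ('g \<Rightarrow> nat \<Rightarrow> 'r) set \<Rightarrow> bool" where
  "left_ideal_of S I \<longleftrightarrow> I \<subseteq> S \<and> (\<lambda>_ _. 0) \<in> I \<and>
     (\<forall>F\<in>I. \<forall>G\<in>I. cadd F G \<in> I) \<and> (\<forall>F\<in>I. (\<lambda>\<gamma> n. - F \<gamma> n) \<in> I) \<and>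
     (\<forall>G\<in>S. \<forall>F\<in>I. cmult G F \<in> I)"

definition Phi :: "('r::ring_1 \<Rightarrow> 'm::ab_group_add \<Rightarrow> 'm) \<Rightarrow> ('m \<Rightarrow> 'm) \<Rightarrow> ('g \<Rightarrow> nat \<Rightarrow> 'm)
    \<Rightarrow> ('g \<Rightarrow> nat \<Rightarrow> 'r) \<Rightarrow> 'm" where
  "Phi smul \<phi> x F = (\<Sum>\<gamma>\<in>{\<gamma>. F \<gamma> \<noteq> (\<lambda>_. 0)}. pact smul \<phi> (F \<gamma>) (x \<gamma> 1))"

definition kerPhi :: "('r::ring_1 \<Rightarrow> 'm::ab_group_add \<Rightarrow> 'm) \<Rightarrow> ('m \<Rightarrow> 'm) \<Rightarrow> 'g set
    \<Rightarrow> ('g \<Rightarrow> nat \<Rightarrow> 'm) \<Rightarrow> ('g \<Rightarrow> nat \<Rightarrow> 'r) set" where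
  "kerPhi smul \<phi> \<Gamma> x = {F \<in> copower \<Gamma>. Phi smul \<phi> x F = 0}"

end

theory Submission
  imports Defs
begin

lemma lm_add_r: "left_module smul \<Longrightarrow> smul r (a + b) = smul r a + smul r b"
  unfolding left_module_def by blast
lemma lm_add_l: "left_module smul \<Longrightarrow> smul (r + s) a = smul r a + smul s a"
  unfolding left_module_def by blast
lemma lm_mult: "left_module smul \<Longrightarrow> smul (r * s) a = smul r (smul s a)"
  unfolding left_module_def by blast
lemma lm_one: "left_module smul \<Longrightarrow> smul 1 a = a"
  unfolding left_module_def by blast
lemma lm_zero_l: assumes "left_module smul" shows "smul 0 a = 0"
proof -
  have "smul (0+0) a = smul 0 a + smul 0 a" using lm_add_l[OF assms] .
  then show ?thesis by simp
qed
lemma lm_zero_r: assumes "left_module smul" shows "smul r 0 = 0"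
proof -
  have "smul r (0+0) = smul r 0 + smul r 0" using lm_add_r[OF assms] .
  then show ?thesis by simp
qed
lemma lm_neg_l: assumes "left_module smul" shows "smul (- r) a = - smul r a"
proof -
  have "smul (-r + r) a = smul (-r) a + smul r a" using lm_add_l[OF assms] .
  then show ?thesis using lm_zero_l[OF assms] by (simp add: eq_neg_iff_add_eq_0)
qed
lemma lm_sum_r: assumes "left_module smul" shows "smul r (sum f S) = (\<Sum>i\<in>S. smul r (f i))"
  by (induction S rule: infinite_finite_induct) (auto simp: lm_zero_r[OF assms] lm_add_r[OF assms])
lemma lm_sum_l: assumes "left_module smul" shows "smul (sum f S) a = (\<Sum>i\<in>S. smul (f i) a)"
  by (induction S rule: infinite_finite_induct) (auto simp: lm_zero_l[OF assms] lm_add_l[OF assms])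

lemma me_add: "module_endo smul \<phi> \<Longrightarrow> \<phi> (a + b) = \<phi> a + \<phi> b"
  unfolding module_endo_def by blast
lemma me_smul: "module_endo smul \<phi> \<Longrightarrow> \<phi> (smul r a) = smul r (\<phi> a)"
  unfolding module_endo_def by blast
lemma me_zero: assumes "module_endo smul \<phi>" shows "\<phi> 0 = 0"
proof -
  have "\<phi> (0+0) = \<phi> 0 + \<phi> 0" using me_add[OF assms] .
  then show ?thesis by simp
qed
lemma me_pow_zero: assumes "module_endo smul \<phi>" shows "(\<phi>^^n) 0 = 0"
  by (induction n) (auto simp: me_zero[OF assms])
lemma me_pow_add: assumes "module_endo smul \<phi>" shows "(\<phi>^^n) (a+b) = (\<phi>^^n) a + (\<phi>^^n) b"
  by (induction n) (auto simp: me_add[OF assms])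
lemma me_pow_smul: assumes "module_endo smul \<phi>" shows "(\<phi>^^n) (smul r a) = smul r ((\<phi>^^n) a)"
  by (induction n) (auto simp: me_smul[OF assms])
lemma me_pow_sum: assumes "module_endo smul \<phi>" shows "(\<phi>^^n) (sum f S) = (\<Sum>i\<in>S. (\<phi>^^n) (f i))"
  by (induction S rule: infinite_finite_induct) (auto simp: me_pow_zero[OF assms] me_pow_add[OF assms])

lemma polys_iff: "f \<in> polys \<longleftrightarrow> (\<exists>N. \<forall>n\<ge>N. f n = 0)"
proof
  assume "f \<in> polys"
  then have "finite {n. f n \<noteq> 0}" by (simp add: polys_def)
  then obtain N where "\<forall>n\<in>{n. f n \<noteq> 0}. n < N" using finite_nat_set_iff_bounded by blast
  then show "\<exists>N. \<forall>n\<ge>N. f n = 0" by (metis mem_Collect_eq not_less)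
next
  assume "\<exists>N. \<forall>n\<ge>N. f n = 0"
  then obtain N where "\<forall>n\<ge>N. f n = 0" by blast
  then have "{n. f n \<noteq> 0} \<subseteq> {..<N}" using not_less by auto
  then show "f \<in> polys" unfolding polys_def using finite_subset by blast
qed

lemma pmult_polys: assumes "h \<in> polys" "f \<in> polys" shows "pmult h f \<in> polys"
proof -
  obtain N1 where N1: "\<forall>n\<ge>N1. h n = 0" using assms(1) polys_iff by blast
  obtain N2 where N2: "\<forall>n\<ge>N2. f n = 0" using assms(2) polys_iff by blast
  have "\<forall>n\<ge>N1+N2. pmult h f n = 0"
  proof (intro allI impI)
    fix n assume n: "n \<ge> N1 + N2"
    have "\<forall>i\<le>n. h i * f (n - i) = 0"
    proof (intro allI impI)
      fix i assume "i \<le> n"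
      show "h i * f (n - i) = 0"
      proof (cases "i \<ge> N1")
        case True then show ?thesis using N1 by simp
      next
        case False then have "n - i \<ge> N2" using n by linarith
        then show ?thesis using N2 by simp
      qed
    qed
    then show "pmult h f n = 0" unfolding pmult_def by simp
  qed
  then show ?thesis using polys_iff by blast
qed

lemma padd_polys: assumes "h \<in> polys" "f \<in> polys" shows "padd h f \<in> polys"
proof -
  have "{n. padd h f n \<noteq> 0} \<subseteq> {n. h n \<noteq> 0} \<union> {n. f n \<noteq> 0}" unfolding padd_def by auto
  then show ?thesis using assms unfolding polys_def by (auto intro: finite_subset)
qed

lemma pmono_polys: "(pmono k :: nat \<Rightarrow> 'a::ring_1) \<in> polys"
proof -
  have "{n. pmono k n \<noteq> (0::'a)} \<subseteq> {k}" by (auto simp: pmono_def)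
  then show ?thesis unfolding polys_def using finite_subset by blast
qed

lemma pact_eq: assumes M: "left_module smul" and "finite S" "{n. f n \<noteq> 0} \<subseteq> S"
  shows "pact smul \<phi> f u = (\<Sum>n\<in>S. smul (f n) ((\<phi>^^n) u))"
  unfolding pact_def
  by (rule sum.mono_neutral_left) (use assms lm_zero_l[OF M] in auto)

lemma pact_zero_poly: assumes M: "left_module smul" shows "pact smul \<phi> (\<lambda>_. 0) u = 0"
  unfolding pact_def by simp

lemma pact_zero_vec: assumes M: "left_module smul" and E: "module_endo smul \<phi>"
  shows "pact smul \<phi> f 0 = 0"
  unfolding pact_def by (simp add: me_pow_zero[OF E] lm_zero_r[OF M])

lemma pact_padd: assumes M: "left_module smul" and "f \<in> polys" "g \<in> polys"
  shows "pact smul \<phi> (padd f g) u = pact smul \<phi> f u + pact smul \<phi> g u"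
proof -
  let ?S = "{n. f n \<noteq> 0} \<union> {n. g n \<noteq> 0}"
  have fin: "finite ?S" using assms unfolding polys_def by auto
  have "pact smul \<phi> (padd f g) u = (\<Sum>n\<in>?S. smul (padd f g n) ((\<phi>^^n) u))"
    by (rule pact_eq[OF M fin]) (auto simp: padd_def)
  also have "\<dots> = (\<Sum>n\<in>?S. smul (f n) ((\<phi>^^n) u)) + (\<Sum>n\<in>?S. smul (g n) ((\<phi>^^n) u))"
    by (simp add: padd_def lm_add_l[OF M] sum.distrib)
  also have "\<dots> = pact smul \<phi> f u + pact smul \<phi> g u"
    using pact_eq[OF M fin, of f] pact_eq[OF M fin, of g] by auto
  finally show ?thesis .
qed

lemma pact_neg: assumes M: "left_module smul"
  shows "pact smul \<phi> (\<lambda>n. - f n) u = - pact smul \<phi> f u"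
  unfolding pact_def by (simp add: lm_neg_l[OF M] sum_negf)

lemma pact_sum_vec: assumes M: "left_module smul" and E: "module_endo smul \<phi>" and "h \<in> polys"
  shows "pact smul \<phi> h (sum g S) = (\<Sum>i\<in>S. pact smul \<phi> h (g i))"
  unfolding pact_def by (simp add: me_pow_sum[OF E] lm_sum_r[OF M] sum.swap[of _ S])

lemma pact_pmono: assumes M: "left_module smul"
  shows "pact smul \<phi> (pmono k) u = (\<phi>^^k) u"
proof -
  have "pact smul \<phi> (pmono k) u = (\<Sum>n\<in>{k}. smul (pmono k n) ((\<phi>^^n) u))"
    by (rule pact_eq[OF M]) (auto simp: pmono_def)
  then show ?thesis by (simp add: pmono_def lm_one[OF M])
qed


lemma pact_pmult: assumes M: "left_module smul" and E: "module_endo smul \<phi>"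
  and h: "h \<in> polys" and f: "f \<in> polys"
  shows "pact smul \<phi> (pmult h f) u = pact smul \<phi> h (pact smul \<phi> f u)"
proof -
  obtain N1 where N1: "\<forall>n\<ge>N1. h n = 0" using h polys_iff by blast
  obtain N2 where N2: "\<forall>n\<ge>N2. f n = 0" using f polys_iff by blast
  define N where "N = max N1 N2"
  have hN: "\<And>n. n \<ge> N \<Longrightarrow> h n = 0" using N1 N_def by auto
  have fN: "\<And>n. n \<ge> N \<Longrightarrow> f n = 0" using N2 N_def by auto
  define T where "T i j = smul (h i) (smul (f j) ((\<phi>^^(i+j)) u))" for i j
  have pmN: "pmult h f n = 0" if "n \<ge> N + N" for n
  proof -
    have "\<forall>i\<le>n. h i * f (n - i) = 0"
    proof (intro allI impI)
      fix i assume "i \<le> n"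
      show "h i * f (n - i) = 0"
      proof (cases "i \<ge> N")
        case True then show ?thesis using hN by simp
      next
        case False then have "n - i \<ge> N" using that by linarith
        then show ?thesis using fN by simp
      qed
    qed
    then show ?thesis unfolding pmult_def by simp
  qed
  have "pact smul \<phi> (pmult h f) u = (\<Sum>n\<in>{..<N+N}. smul (pmult h f n) ((\<phi>^^n) u))"
    by (rule pact_eq[OF M]) (use pmN not_less in auto)
  also have "\<dots> = (\<Sum>n\<in>{..<N+N}. \<Sum>i\<in>{..n}. T i (n - i))"
    unfolding pmult_def T_def by (auto simp: lm_sum_l[OF M] lm_mult[OF M] intro!: sum.cong)
  also have "\<dots> = (\<Sum>(i,j)\<in>{(i,j). i+j < N+N}. T i j)"
    by (rule sum.triangle_reindex[symmetric])
  also have "\<dots> = (\<Sum>(i,j)\<in>{..<N}\<times>{..<N}. T i j)"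
  proof (rule sum.mono_neutral_right)
    show "finite {(i, j). i + j < N + N}"
      by (rule finite_subset[of _ "{..<N+N}\<times>{..<N+N}"]) auto
    show "{..<N} \<times> {..<N} \<subseteq> {(i, j). i + j < N + N}" by auto
    show "\<forall>p\<in>{(i, j). i + j < N + N} - {..<N} \<times> {..<N}. (case p of (i, j) \<Rightarrow> T i j) = 0"
    proof
      fix p assume p: "p \<in> {(i, j). i + j < N + N} - {..<N} \<times> {..<N}"
      obtain i j where ij: "p = (i,j)" by fastforce
      have "i \<ge> N \<or> j \<ge> N" using p ij by auto
      then show "(case p of (i, j) \<Rightarrow> T i j) = 0"
        using hN fN ij by (auto simp: T_def lm_zero_l[OF M] lm_zero_r[OF M])
    qed
  qed
  also have "\<dots> = (\<Sum>i\<in>{..<N}. \<Sum>j\<in>{..<N}. T i j)"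
    by (rule sum.cartesian_product[symmetric])
  also have "\<dots> = (\<Sum>i\<in>{..<N}. smul (h i) ((\<phi>^^i) (\<Sum>j\<in>{..<N}. smul (f j) ((\<phi>^^j) u))))"
    by (simp add: T_def lm_sum_r[OF M] me_pow_sum[OF E] me_pow_smul[OF E] funpow_add)
  also have "\<dots> = pact smul \<phi> h (\<Sum>j\<in>{..<N}. smul (f j) ((\<phi>^^j) u))"
    by (rule pact_eq[OF M, symmetric]) (use hN not_less in auto)
  also have "(\<Sum>j\<in>{..<N}. smul (f j) ((\<phi>^^j) u)) = pact smul \<phi> f u"
    by (rule pact_eq[OF M, symmetric]) (use fN not_less in auto)
  finally show ?thesis .
qed


definition yF :: "('r::ring_1 \<Rightarrow> 'm::ab_group_add \<Rightarrow> 'm) \<Rightarrow> 'g set \<Rightarrow> ('g \<Rightarrow> nat) \<Rightarrow> ('g \<Rightarrow> nat \<Rightarrow> 'm)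
   \<Rightarrow> ('g \<Rightarrow> nat \<Rightarrow> 'r) \<Rightarrow> 'g \<times> nat \<Rightarrow> 'm" where
  "yF smul \<Gamma> k x F p = (if p \<in> jidx \<Gamma> k then smul (F (fst p) (snd p - 1)) (x (fst p) (snd p)) else 0)"

context
  fixes smul :: "'r::ring_1 \<Rightarrow> 'm::ab_group_add \<Rightarrow> 'm"
    and \<phi> :: "'m \<Rightarrow> 'm"
    and \<Gamma> :: "'g set" and k :: "'g \<Rightarrow> nat" and x :: "'g \<Rightarrow> nat \<Rightarrow> 'm"
  assumes M: "left_module smul"
    and E: "module_endo smul \<phi>"
    and J: "nilpotent_jordan_base smul \<phi> \<Gamma> k x"
begin

lemma k_pos: "\<gamma> \<in> \<Gamma> \<Longrightarrow> 1 \<le> k \<gamma>"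
  using J unfolding nilpotent_jordan_base_def by blast

lemma jb_pow: assumes "\<gamma> \<in> \<Gamma>" shows "Suc n \<le> k \<gamma> \<Longrightarrow> (\<phi>^^n) (x \<gamma> 1) = x \<gamma> (Suc n)"
proof (induction n)
  case 0 then show ?case by simp
next
  case (Suc n)
  then have "(\<phi>^^n) (x \<gamma> 1) = x \<gamma> (Suc n)" by simp
  moreover have "\<phi> (x \<gamma> (Suc n)) = x \<gamma> (Suc (Suc n))"
    using J assms Suc.prems unfolding nilpotent_jordan_base_def by auto
  ultimately show ?case by simp
qed

lemma jb_pow_zero: assumes "\<gamma> \<in> \<Gamma>" "n \<ge> k \<gamma>" shows "(\<phi>^^n) (x \<gamma> 1) = 0"
proof -
  have k1: "1 \<le> k \<gamma>" using k_pos assms by blast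
  have "(\<phi>^^(k \<gamma> - 1)) (x \<gamma> 1) = x \<gamma> (k \<gamma>)" using jb_pow[OF assms(1), of "k \<gamma> - 1"] k1 by simp
  moreover have "\<phi> (x \<gamma> (k \<gamma>)) = 0" using J assms unfolding nilpotent_jordan_base_def by blast
  ultimately have "(\<phi>^^(Suc (k \<gamma> - 1))) (x \<gamma> 1) = 0" by simp
  then have kz: "(\<phi>^^(k \<gamma>)) (x \<gamma> 1) = 0" using k1 by simp
  have "(\<phi>^^n) (x \<gamma> 1) = (\<phi>^^(n - k \<gamma>)) ((\<phi>^^(k \<gamma>)) (x \<gamma> 1))"
    using assms(2) by (metis comp_apply funpow_add le_add_diff_inverse2)
  then show ?thesis using kz me_pow_zero[OF E] by simp
qed

lemma pact_x1: assumes "\<gamma> \<in> \<Gamma>" "f \<in> polys"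
  shows "pact smul \<phi> f (x \<gamma> 1) = (\<Sum>n\<in>{..<k \<gamma>}. smul (f n) (x \<gamma> (Suc n)))"
proof -
  let ?S = "{n. f n \<noteq> 0} \<union> {..<k \<gamma>}"
  have fin: "finite ?S" using assms(2) unfolding polys_def by auto
  have "pact smul \<phi> f (x \<gamma> 1) = (\<Sum>n\<in>?S. smul (f n) ((\<phi>^^n) (x \<gamma> 1)))"
    by (rule pact_eq[OF M fin]) auto
  also have "\<dots> = (\<Sum>n\<in>{..<k \<gamma>}. smul (f n) ((\<phi>^^n) (x \<gamma> 1)))"
  proof (rule sum.mono_neutral_right[OF fin])
    show "{..<k \<gamma>} \<subseteq> ?S" by auto
    show "\<forall>i\<in>?S - {..<k \<gamma>}. smul (f i) ((\<phi> ^^ i) (x \<gamma> 1)) = 0"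
    proof
      fix i assume "i \<in> ?S - {..<k \<gamma>}"
      then have "i \<ge> k \<gamma>" by auto
      then have "(\<phi> ^^ i) (x \<gamma> 1) = 0" by (rule jb_pow_zero[OF assms(1)])
      then show "smul (f i) ((\<phi> ^^ i) (x \<gamma> 1)) = 0" by (simp add: lm_zero_r[OF M])
    qed
  qed
  also have "\<dots> = (\<Sum>n\<in>{..<k \<gamma>}. smul (f n) (x \<gamma> (Suc n)))"
  proof (rule sum.cong)
    fix n assume "n \<in> {..<k \<gamma>}"
    then have "Suc n \<le> k \<gamma>" by simp
    then show "smul (f n) ((\<phi> ^^ n) (x \<gamma> 1)) = smul (f n) (x \<gamma> (Suc n))"
      by (simp only: jb_pow[OF assms(1)])
  qed simp
  finally show ?thesis .
qed

lemma Phi_eq: assumes "finite S" "{\<gamma>. F \<gamma> \<noteq> (\<lambda>_. 0)} \<subseteq> S"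
  shows "Phi smul \<phi> x F = (\<Sum>\<gamma>\<in>S. pact smul \<phi> (F \<gamma>) (x \<gamma> 1))"
  unfolding Phi_def
  by (rule sum.mono_neutral_left) (use assms pact_zero_poly[OF M] in auto)

lemma copowerD: assumes "F \<in> copower \<Gamma>"
  shows "finite {\<gamma>. F \<gamma> \<noteq> (\<lambda>_. 0)}" "\<And>\<gamma>. F \<gamma> \<in> polys" "\<And>\<gamma>. \<gamma> \<notin> \<Gamma> \<Longrightarrow> F \<gamma> = (\<lambda>_. 0)"
  using assms unfolding copower_def dirpower_def by auto

lemma Phi_decomp: assumes F: "F \<in> copower \<Gamma>"
  shows "finite {p. yF smul \<Gamma> k x F p \<noteq> 0}"
    "Phi smul \<phi> x F = (\<Sum>p\<in>{p. yF smul \<Gamma> k x F p \<noteq> 0}. yF smul \<Gamma> k x F p)"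
proof -
  let ?y = "yF smul \<Gamma> k x F"
  define A where "A = {\<gamma>. F \<gamma> \<noteq> (\<lambda>_. 0)}"
  have finA: "finite A" using copowerD(1)[OF F] A_def by simp
  have AG: "A \<subseteq> \<Gamma>" using copowerD(3)[OF F] A_def by blast
  define g where "g = (\<lambda>(\<gamma>::'g, n::nat). (\<gamma>, Suc n))"
  define Sg where "Sg = Sigma A (\<lambda>\<gamma>. {..<k \<gamma>})"
  have finSg: "finite Sg" unfolding Sg_def using finA by auto
  have injg: "inj_on g Sg" unfolding g_def inj_on_def by auto
  have "Phi smul \<phi> x F = (\<Sum>\<gamma>\<in>A. pact smul \<phi> (F \<gamma>) (x \<gamma> 1))"
    by (rule Phi_eq[OF finA]) (simp add: A_def)
  also have "\<dots> = (\<Sum>\<gamma>\<in>A. \<Sum>n\<in>{..<k \<gamma>}. smul (F \<gamma> n) (x \<gamma> (Suc n)))"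
    by (rule sum.cong) (use AG pact_x1 copowerD(2)[OF F] in auto)
  also have "\<dots> = (\<Sum>q\<in>Sg. smul (F (fst q) (snd q)) (x (fst q) (Suc (snd q))))"
    unfolding Sg_def by (subst sum.Sigma) (use finA in \<open>auto simp: split_beta\<close>)
  also have "\<dots> = (\<Sum>q\<in>Sg. ?y (g q))"
  proof (rule sum.cong)
    fix q assume q: "q \<in> Sg"
    then have "g q \<in> jidx \<Gamma> k" using AG unfolding Sg_def g_def jidx_def by auto
    then show "smul (F (fst q) (snd q)) (x (fst q) (Suc (snd q))) = ?y (g q)"
      unfolding yF_def g_def by (auto split: prod.splits)
  qed simp
  also have "\<dots> = (\<Sum>p\<in>g ` Sg. ?y p)" by (simp add: sum.reindex[OF injg])
  also have "\<dots> = (\<Sum>p\<in>{p. ?y p \<noteq> 0}. ?y p)"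
  proof (rule sum.mono_neutral_right)
    show "finite (g ` Sg)" using finSg by simp
    show "{p. ?y p \<noteq> 0} \<subseteq> g ` Sg"
    proof
      fix p assume p: "p \<in> {p. ?y p \<noteq> 0}"
      obtain \<gamma> i where pi: "p = (\<gamma>, i)" by fastforce
      have pj: "p \<in> jidx \<Gamma> k" using p unfolding yF_def by (auto split: if_splits)
      then have i: "1 \<le> i" "i \<le> k \<gamma>" using pi unfolding jidx_def by auto
      have "F \<gamma> \<noteq> (\<lambda>_. 0)"
      proof
        assume "F \<gamma> = (\<lambda>_. 0)"
        then have "?y p = 0" using pi by (simp add: yF_def lm_zero_l[OF M])
        then show False using p by simp
      qed
      then have "(\<gamma>, i - 1) \<in> Sg" using i unfolding Sg_def A_def by auto
      moreover have "g (\<gamma>, i - 1) = p" using i pi unfolding g_def by auto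
      ultimately show "p \<in> g ` Sg" by force
    qed
  qed auto
  finally show "Phi smul \<phi> x F = (\<Sum>p\<in>{p. ?y p \<noteq> 0}. ?y p)" .
  show "finite {p. ?y p \<noteq> 0}"
  proof (rule finite_subset)
    show "finite (g ` Sg)" using finSg by simp
    show "{p. ?y p \<noteq> 0} \<subseteq> g ` Sg"
    proof
      fix p assume p: "p \<in> {p. ?y p \<noteq> 0}"
      obtain \<gamma> i where pi: "p = (\<gamma>, i)" by fastforce
      have pj: "p \<in> jidx \<Gamma> k" using p unfolding yF_def by (auto split: if_splits)
      then have i: "1 \<le> i" "i \<le> k \<gamma>" using pi unfolding jidx_def by auto
      have "F \<gamma> \<noteq> (\<lambda>_. 0)"
      proof
        assume "F \<gamma> = (\<lambda>_. 0)"
        then have "?y p = 0" using pi by (simp add: yF_def lm_zero_l[OF M])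
        then show False using p by simp
      qed
      then have "(\<gamma>, i - 1) \<in> Sg" using i unfolding Sg_def A_def by auto
      moreover have "g (\<gamma>, i - 1) = p" using i pi unfolding g_def by auto
      ultimately show "p \<in> g ` Sg" by force
    qed
  qed
qed


lemma ker_components: assumes F: "F \<in> copower \<Gamma>" and P: "Phi smul \<phi> x F = 0"
  shows "pact smul \<phi> (F \<gamma>) (x \<gamma> 1) = 0"
proof -
  let ?y = "yF smul \<Gamma> k x F"
  let ?I = "jidx \<Gamma> k"
  have ids: "internal_direct_sum smul ?I (\<lambda>(\<gamma>, i). x \<gamma> i)"
    using J unfolding nilpotent_jordan_base_def by blast
  define Q where "Q = (\<lambda>y. (\<forall>p. p \<notin> ?I \<longrightarrow> y p = 0) \<and> finite {p. y p \<noteq> 0} \<and>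
               (\<forall>p\<in>?I. y p \<in> cyclic_sub smul ((\<lambda>(\<gamma>, i). x \<gamma> i) p)) \<and>
               (0::'m) = (\<Sum>p\<in>{p. y p \<noteq> 0}. y p))"
  have ex1: "\<exists>!y. Q y" using ids unfolding internal_direct_sum_def Q_def by blast
  have Q0: "Q (\<lambda>_. 0)" unfolding Q_def cyclic_sub_def
    using lm_zero_l[OF M] by (auto simp: image_def intro: exI[of _ 0])
  have Qy: "Q ?y" unfolding Q_def
  proof (intro conjI)
    show "\<forall>p. p \<notin> ?I \<longrightarrow> ?y p = 0" by (simp add: yF_def)
    show "finite {p. ?y p \<noteq> 0}" by (rule Phi_decomp(1)[OF F])
    show "\<forall>p\<in>?I. ?y p \<in> cyclic_sub smul ((\<lambda>(\<gamma>, i). x \<gamma> i) p)"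
      by (auto simp: yF_def cyclic_sub_def)
    show "0 = (\<Sum>p\<in>{p. ?y p \<noteq> 0}. ?y p)" using Phi_decomp(2)[OF F] P by simp
  qed
  have yz: "?y = (\<lambda>_. 0)" using ex1 Q0 Qy by blast
  show ?thesis
  proof (cases "\<gamma> \<in> \<Gamma>")
    case True
    have "pact smul \<phi> (F \<gamma>) (x \<gamma> 1) = (\<Sum>n\<in>{..<k \<gamma>}. smul (F \<gamma> n) (x \<gamma> (Suc n)))"
      by (rule pact_x1[OF True copowerD(2)[OF F]])
    also have "\<dots> = (\<Sum>n\<in>{..<k \<gamma>}. ?y (\<gamma>, Suc n))"
      by (rule sum.cong) (use True in \<open>auto simp: yF_def jidx_def\<close>)
    also have "\<dots> = 0" using yz by simp
    finally show ?thesis .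
  next
    case False
    then show ?thesis using copowerD(3)[OF F] pact_zero_poly[OF M] by simp
  qed
qed

lemma Phi_surj: "\<exists>F\<in>copower \<Gamma>. Phi smul \<phi> x F = m"
proof -
  let ?I = "jidx \<Gamma> k"
  have ids: "internal_direct_sum smul ?I (\<lambda>(\<gamma>, i). x \<gamma> i)"
    using J unfolding nilpotent_jordan_base_def by blast
  then obtain y where y0: "\<forall>p. p \<notin> ?I \<longrightarrow> y p = 0" and yfin: "finite {p. y p \<noteq> 0}"
    and ycyc: "\<forall>p\<in>?I. y p \<in> cyclic_sub smul ((\<lambda>(\<gamma>, i). x \<gamma> i) p)"
    and ysum: "m = (\<Sum>p\<in>{p. y p \<noteq> 0}. y p)"
    unfolding internal_direct_sum_def by blast
  define Y where "Y = {p. y p \<noteq> 0}"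
  define r where "r p = (SOME r. y p = smul r (x (fst p) (snd p)))" for p
  have r: "y p = smul (r p) (x (fst p) (snd p))" if "p \<in> ?I" for p
  proof -
    have "\<exists>r. y p = smul r (x (fst p) (snd p))"
    proof -
      obtain a b where ab: "p = (a, b)" by fastforce
      have "y p \<in> range (\<lambda>r. smul r (x a b))" using ycyc that ab unfolding cyclic_sub_def by auto
      then show ?thesis using ab by auto
    qed
    then show ?thesis unfolding r_def by (rule someI_ex)
  qed
  define F where "F \<gamma> n = (if (\<gamma>, Suc n) \<in> ?I \<and> y (\<gamma>, Suc n) \<noteq> 0 then r (\<gamma>, Suc n) else 0)" for \<gamma> n
  have Fpoly: "F \<gamma> \<in> polys" for \<gamma>
  proof -
    have "{n. F \<gamma> n \<noteq> 0} \<subseteq> (\<lambda>p. snd p - 1) ` Y"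
    proof
      fix n assume "n \<in> {n. F \<gamma> n \<noteq> 0}"
      then have "(\<gamma>, Suc n) \<in> Y" unfolding F_def Y_def by (auto split: if_splits)
      then show "n \<in> (\<lambda>p. snd p - 1) ` Y" by force
    qed
    then show ?thesis unfolding polys_def using yfin Y_def finite_subset by blast
  qed
  have Fcop: "F \<in> copower \<Gamma>"
  proof -
    have "\<gamma> \<notin> \<Gamma> \<Longrightarrow> F \<gamma> = (\<lambda>_. 0)" for \<gamma> unfolding F_def jidx_def by auto
    moreover have "{\<gamma>. F \<gamma> \<noteq> (\<lambda>_. 0)} \<subseteq> fst ` Y"
    proof
      fix \<gamma> assume "\<gamma> \<in> {\<gamma>. F \<gamma> \<noteq> (\<lambda>_. 0)}"
      then obtain n where "F \<gamma> n \<noteq> 0" by auto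
      then have "(\<gamma>, Suc n) \<in> Y" unfolding F_def Y_def by (auto split: if_splits)
      then show "\<gamma> \<in> fst ` Y" by force
    qed
    then have "finite {\<gamma>. F \<gamma> \<noteq> (\<lambda>_. 0)}" using yfin Y_def finite_subset by blast
    ultimately show ?thesis unfolding copower_def dirpower_def using Fpoly by blast
  qed
  have yy: "yF smul \<Gamma> k x F = y"
  proof
    fix p :: "'g \<times> nat"
    obtain \<gamma> i where pi: "p = (\<gamma>, i)" by fastforce
    show "yF smul \<Gamma> k x F p = y p"
    proof (cases "p \<in> ?I")
      case True
      then have i: "1 \<le> i" using pi unfolding jidx_def by auto
      then have si: "Suc (i - 1) = i" by simp
      show ?thesis
      proof (cases "y p = 0")
        case True
        then show ?thesis using \<open>p \<in> ?I\<close> pi si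
          by (simp add: yF_def F_def lm_zero_l[OF M])
      next
        case False
        then show ?thesis using \<open>p \<in> ?I\<close> pi si r[OF \<open>p \<in> ?I\<close>]
          by (simp add: yF_def F_def)
      qed
    next
      case False
      then show ?thesis using y0 unfolding yF_def by presburger
    qed
  qed
  have "Phi smul \<phi> x F = m" using Phi_decomp(2)[OF Fcop] ysum yy by simp
  then show ?thesis using Fcop by blast
qed

end

lemma jacobson_ann: assumes M: "left_module smul"
  and S: "simple_submodule smul (cyclic_sub smul v)" and r: "r \<in> jacobson"
  shows "smul r v = 0"
proof -
  define A where "A = {r. smul r v = 0}"
  have liA: "left_ideal A" unfolding left_ideal_def A_def
    by (auto simp: lm_zero_l[OF M] lm_add_l[OF M] lm_neg_l[OF M] lm_mult[OF M] lm_zero_r[OF M])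
  have "A \<noteq> UNIV"
  proof
    assume "A = UNIV"
    then have "smul 1 v = 0" unfolding A_def by auto
    then have v0: "v = 0" using lm_one[OF M] by simp
    have "cyclic_sub smul v = {0}" unfolding cyclic_sub_def v0 using lm_zero_r[OF M] by auto
    then show False using S unfolding simple_submodule_def by blast
  qed
  moreover have "\<forall>L. left_ideal L \<longrightarrow> A \<subseteq> L \<longrightarrow> L = A \<or> L = UNIV"
  proof (intro allI impI)
    fix L :: "'a set" assume L: "left_ideal L" and AL: "A \<subseteq> L"
    define N where "N = (\<lambda>l. smul l v) ` L"
    have subN: "submodule smul N" unfolding submodule_def N_def
    proof (intro conjI ballI allI)
      show "0 \<in> (\<lambda>l. smul l v) ` L" using L lm_zero_l[OF M] unfolding left_ideal_def by force
    next
      fix a b assume "a \<in> (\<lambda>l. smul l v) ` L" "b \<in> (\<lambda>l. smul l v) ` L"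
      then obtain la lb where "la \<in> L" "lb \<in> L" "a = smul la v" "b = smul lb v" by blast
      then show "a + b \<in> (\<lambda>l. smul l v) ` L" using L lm_add_l[OF M, of la lb v]
        unfolding left_ideal_def by (metis image_eqI)
    next
      fix r a assume "a \<in> (\<lambda>l. smul l v) ` L"
      then obtain la where "la \<in> L" "a = smul la v" by blast
      then show "smul r a \<in> (\<lambda>l. smul l v) ` L" using L lm_mult[OF M, of r la v]
        unfolding left_ideal_def by (metis image_eqI)
    qed
    have "N \<subseteq> cyclic_sub smul v" unfolding N_def cyclic_sub_def by auto
    then have "N = {0} \<or> N = cyclic_sub smul v" using S subN unfolding simple_submodule_def by blast
    then show "L = A \<or> L = UNIV"
    proof
      assume "N = {0}"
      then have "L \<subseteq> A" unfolding N_def A_def by auto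
      then show ?thesis using AL by blast
    next
      assume "N = cyclic_sub smul v"
      then have "v \<in> N" unfolding cyclic_sub_def using lm_one[OF M] by (metis rangeI)
      then obtain l where l: "l \<in> L" "smul l v = v" unfolding N_def by (metis imageE)
      have "smul (1 - l) v = 0" using l lm_add_l[OF M, of 1 "- l" v] lm_neg_l[OF M] lm_one[OF M]
        by simp
      then have "1 - l \<in> L" using AL unfolding A_def by blast
      then have "(1 - l) + l \<in> L" using l L unfolding left_ideal_def by blast
      then have one: "1 \<in> L" by simp
      have "\<forall>s. s \<in> L" using one L unfolding left_ideal_def by (metis mult.right_neutral)
      then show ?thesis by blast
    qed
  qed
  ultimately have "maximal_left_ideal A" using liA unfolding maximal_left_ideal_def by blast
  then have "jacobson \<subseteq> A" unfolding jacobson_def by blast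
  then show ?thesis using r unfolding A_def by blast
qed


theorem theorem3p1:
  fixes smul :: "'r::ring_1 \<Rightarrow> 'm::ab_group_add \<Rightarrow> 'm"
    and \<phi> :: "'m \<Rightarrow> 'm"
    and \<Gamma> :: "'g set" and k :: "'g \<Rightarrow> nat" and x :: "'g \<Rightarrow> nat \<Rightarrow> 'm"
  assumes "left_module smul"
    and "module_endo smul \<phi>"
    and "nilpotent_map \<phi>"
    and "nilpotent_jordan_base smul \<phi> \<Gamma> k x"
  shows "(\<forall>F\<in>copower \<Gamma>. \<forall>G\<in>copower \<Gamma>.
            Phi smul \<phi> x (cadd F G) = Phi smul \<phi> x F + Phi smul \<phi> x G)
       \<and> (\<forall>h\<in>polys. \<forall>F\<in>copower \<Gamma>.
            Phi smul \<phi> x (cscal h F) = pact smul \<phi> h (Phi smul \<phi> x F))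
       \<and> (\<forall>m. \<exists>F\<in>copower \<Gamma>. Phi smul \<phi> x F = m)
       \<and> (\<forall>F\<in>copower \<Gamma>. \<phi> (Phi smul \<phi> x F) = Phi smul \<phi> x (cscal (pmono 1) F))
       \<and> {F \<in> copower \<Gamma>. \<forall>\<gamma>\<in>\<Gamma>. F \<gamma> \<in> jac_plus_tk (k \<gamma>)} \<subseteq> kerPhi smul \<phi> \<Gamma> x
       \<and> left_ideal_of (dirpower \<Gamma>) (kerPhi smul \<phi> \<Gamma> x)
       \<and> left_ideal_of (copower \<Gamma>) (kerPhi smul \<phi> \<Gamma> x)"
proof -
  note M = assms(1) and E = assms(2) and J = assms(4)
  have add: "Phi smul \<phi> x (cadd F G) = Phi smul \<phi> x F + Phi smul \<phi> x G"
    if F: "F \<in> copower \<Gamma>" and G: "G \<in> copower \<Gamma>" for F G :: "'g \<Rightarrow> nat \<Rightarrow> 'r"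
  proof -
    let ?S = "{\<gamma>. F \<gamma> \<noteq> (\<lambda>_. 0)} \<union> {\<gamma>. G \<gamma> \<noteq> (\<lambda>_. 0)}"
    have fin: "finite ?S" using copowerD(1)[OF M E J F] copowerD(1)[OF M E J G] by simp
    have "Phi smul \<phi> x (cadd F G) = (\<Sum>\<gamma>\<in>?S. pact smul \<phi> (cadd F G \<gamma>) (x \<gamma> 1))"
      by (rule Phi_eq[OF M E J fin]) (auto simp: cadd_def padd_def)
    also have "\<dots> = (\<Sum>\<gamma>\<in>?S. pact smul \<phi> (F \<gamma>) (x \<gamma> 1)) + (\<Sum>\<gamma>\<in>?S. pact smul \<phi> (G \<gamma>) (x \<gamma> 1))"
      by (simp add: cadd_def pact_padd[OF M copowerD(2)[OF M E J F] copowerD(2)[OF M E J G]]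
          sum.distrib)
    also have "\<dots> = Phi smul \<phi> x F + Phi smul \<phi> x G"
      using Phi_eq[OF M E J fin, of F] Phi_eq[OF M E J fin, of G] by auto
    finally show ?thesis .
  qed
  have pmz: "pmult h (\<lambda>_. 0) = (\<lambda>_. (0::'r))" for h :: "nat \<Rightarrow> 'r" by (simp add: pmult_def)
  have scal: "Phi smul \<phi> x (cscal h F) = pact smul \<phi> h (Phi smul \<phi> x F)"
    if h: "h \<in> polys" and F: "F \<in> copower \<Gamma>" for h :: "nat \<Rightarrow> 'r" and F :: "'g \<Rightarrow> nat \<Rightarrow> 'r"
  proof -
    let ?S = "{\<gamma>. F \<gamma> \<noteq> (\<lambda>_. 0)}"
    have fin: "finite ?S" using copowerD(1)[OF M E J F] by simp
    have "Phi smul \<phi> x (cscal h F) = (\<Sum>\<gamma>\<in>?S. pact smul \<phi> (cscal h F \<gamma>) (x \<gamma> 1))"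
      by (rule Phi_eq[OF M E J fin]) (auto simp: cscal_def pmz)
    also have "\<dots> = (\<Sum>\<gamma>\<in>?S. pact smul \<phi> h (pact smul \<phi> (F \<gamma>) (x \<gamma> 1)))"
      by (simp add: cscal_def pact_pmult[OF M E h copowerD(2)[OF M E J F]])
    also have "\<dots> = pact smul \<phi> h (\<Sum>\<gamma>\<in>?S. pact smul \<phi> (F \<gamma>) (x \<gamma> 1))"
      by (rule pact_sum_vec[OF M E h, symmetric])
    also have "\<dots> = pact smul \<phi> h (Phi smul \<phi> x F)"
      using Phi_eq[OF M E J fin, of F] by auto
    finally show ?thesis .
  qed
  have jac: "{F \<in> copower \<Gamma>. \<forall>\<gamma>\<in>\<Gamma>. F \<gamma> \<in> jac_plus_tk (k \<gamma>)} \<subseteq> kerPhi smul \<phi> \<Gamma> x"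
  proof
    fix F :: "'g \<Rightarrow> nat \<Rightarrow> 'r" assume "F \<in> {F \<in> copower \<Gamma>. \<forall>\<gamma>\<in>\<Gamma>. F \<gamma> \<in> jac_plus_tk (k \<gamma>)}"
    then have F: "F \<in> copower \<Gamma>" and FJ: "\<forall>\<gamma>\<in>\<Gamma>. F \<gamma> \<in> jac_plus_tk (k \<gamma>)" by auto
    have comp: "pact smul \<phi> (F \<gamma>) (x \<gamma> 1) = 0" for \<gamma>
    proof (cases "\<gamma> \<in> \<Gamma>")
      case False
      then show ?thesis using copowerD(3)[OF M E J F] pact_zero_poly[OF M] by simp
    next
      case True
      obtain a b where ab: "F \<gamma> = padd a b" "\<forall>n. a n \<in> jacobson"
        "\<exists>g\<in>polys. b = pmult g (pmono (k \<gamma>))"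
        using FJ True unfolding jac_plus_tk_def by blast
      then obtain g where b: "b = pmult g (pmono (k \<gamma>))" by blast
      have bz: "b n = 0" if "n < k \<gamma>" for n
        unfolding b pmult_def pmono_def using that by (intro sum.neutral) auto
      have "pact smul \<phi> (F \<gamma>) (x \<gamma> 1) = (\<Sum>n\<in>{..<k \<gamma>}. smul (F \<gamma> n) (x \<gamma> (Suc n)))"
        by (rule pact_x1[OF M E J True copowerD(2)[OF M E J F]])
      also have "\<dots> = 0"
      proof (rule sum.neutral, rule ballI)
        fix n assume n: "n \<in> {..<k \<gamma>}"
        then have Fn: "F \<gamma> n = a n" using ab bz by (simp add: padd_def)
        have "(\<gamma>, Suc n) \<in> jidx \<Gamma> k" using n True unfolding jidx_def by auto
        then have "simple_submodule smul (cyclic_sub smul (x \<gamma> (Suc n)))"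
          using J unfolding nilpotent_jordan_base_def by auto
        then show "smul (F \<gamma> n) (x \<gamma> (Suc n)) = 0"
          using jacobson_ann[OF M] ab(2) Fn by metis
      qed
      finally show ?thesis .
    qed
    have "Phi smul \<phi> x F = 0" unfolding Phi_def using comp by simp
    then show "F \<in> kerPhi smul \<phi> \<Gamma> x" using F unfolding kerPhi_def by simp
  qed
  have cd: "copower \<Gamma> \<subseteq> dirpower \<Gamma>" unfolding copower_def by auto
  have ideal: "left_ideal_of (dirpower \<Gamma>) (kerPhi smul \<phi> \<Gamma> x)"
    unfolding left_ideal_of_def
  proof (intro conjI ballI)
    show "kerPhi smul \<phi> \<Gamma> x \<subseteq> dirpower \<Gamma>" using cd unfolding kerPhi_def by auto
  next
    have "(\<lambda>_ _. 0) \<in> copower \<Gamma>" unfolding copower_def dirpower_def polys_def by auto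
    moreover have "Phi smul \<phi> x (\<lambda>_ _. (0::'r)) = 0" unfolding Phi_def by simp
    ultimately show "(\<lambda>_ _. 0) \<in> kerPhi smul \<phi> \<Gamma> x" unfolding kerPhi_def by simp
  next
    fix F G :: "'g \<Rightarrow> nat \<Rightarrow> 'r" assume F: "F \<in> kerPhi smul \<phi> \<Gamma> x" and G: "G \<in> kerPhi smul \<phi> \<Gamma> x"
    then have Fc: "F \<in> copower \<Gamma>" and Gc: "G \<in> copower \<Gamma>" unfolding kerPhi_def by auto
    have "cadd F G \<in> copower \<Gamma>"
    proof -
      have "\<forall>\<gamma>. cadd F G \<gamma> \<in> polys"
        using copowerD(2)[OF M E J Fc] copowerD(2)[OF M E J Gc] by (simp add: cadd_def padd_polys)
      moreover have "\<forall>\<gamma>. \<gamma> \<notin> \<Gamma> \<longrightarrow> cadd F G \<gamma> = (\<lambda>_. 0)"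
        using copowerD(3)[OF M E J Fc] copowerD(3)[OF M E J Gc] by (simp add: cadd_def padd_def)
      moreover have "finite {\<gamma>. cadd F G \<gamma> \<noteq> (\<lambda>_. 0)}"
      proof (rule finite_subset)
        show "{\<gamma>. cadd F G \<gamma> \<noteq> (\<lambda>_. 0)} \<subseteq> {\<gamma>. F \<gamma> \<noteq> (\<lambda>_. 0)} \<union> {\<gamma>. G \<gamma> \<noteq> (\<lambda>_. 0)}"
          by (auto simp: cadd_def padd_def)
        show "finite ({\<gamma>. F \<gamma> \<noteq> (\<lambda>_. 0)} \<union> {\<gamma>. G \<gamma> \<noteq> (\<lambda>_. 0)})"
          using copowerD(1)[OF M E J Fc] copowerD(1)[OF M E J Gc] by simp
      qed
      ultimately show ?thesis unfolding copower_def dirpower_def by blast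
    qed
    then show "cadd F G \<in> kerPhi smul \<phi> \<Gamma> x"
      using add[OF Fc Gc] F G unfolding kerPhi_def by simp
  next
    fix F :: "'g \<Rightarrow> nat \<Rightarrow> 'r" assume F: "F \<in> kerPhi smul \<phi> \<Gamma> x"
    then have Fc: "F \<in> copower \<Gamma>" unfolding kerPhi_def by auto
    let ?N = "\<lambda>\<gamma> n. - F \<gamma> n"
    have supp: "{\<gamma>. ?N \<gamma> \<noteq> (\<lambda>_. 0)} = {\<gamma>. F \<gamma> \<noteq> (\<lambda>_. 0)}"
      by (auto simp: fun_eq_iff)
    have Nc: "?N \<in> copower \<Gamma>"
      using Fc supp unfolding copower_def dirpower_def polys_def by (auto simp: fun_eq_iff)
    have "Phi smul \<phi> x ?N = - Phi smul \<phi> x F"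
      unfolding Phi_def supp by (simp add: pact_neg[OF M] sum_negf)
    then show "?N \<in> kerPhi smul \<phi> \<Gamma> x" using F Nc unfolding kerPhi_def by simp
  next
    fix G F :: "'g \<Rightarrow> nat \<Rightarrow> 'r" assume G: "G \<in> dirpower \<Gamma>" and F: "F \<in> kerPhi smul \<phi> \<Gamma> x"
    then have Fc: "F \<in> copower \<Gamma>" and P: "Phi smul \<phi> x F = 0" unfolding kerPhi_def by auto
    have Gp: "G \<gamma> \<in> polys" for \<gamma> using G unfolding dirpower_def by auto
    let ?S = "{\<gamma>. F \<gamma> \<noteq> (\<lambda>_. 0)}"
    have fin: "finite ?S" using copowerD(1)[OF M E J Fc] by simp
    have sub: "{\<gamma>. cmult G F \<gamma> \<noteq> (\<lambda>_. 0)} \<subseteq> ?S" by (auto simp: cmult_def pmz)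
    have cp: "cmult G F \<gamma> \<in> polys" for \<gamma>
      unfolding cmult_def by (rule pmult_polys[OF Gp copowerD(2)[OF M E J Fc]])
    have "cmult G F \<in> copower \<Gamma>"
      unfolding copower_def dirpower_def
      using cp copowerD(3)[OF M E J Fc] finite_subset[OF sub fin]
      by (auto simp: cmult_def pmz)
    moreover have "Phi smul \<phi> x (cmult G F) = 0"
    proof -
      have "Phi smul \<phi> x (cmult G F) = (\<Sum>\<gamma>\<in>?S. pact smul \<phi> (cmult G F \<gamma>) (x \<gamma> 1))"
        by (rule Phi_eq[OF M E J fin sub])
      also have "\<dots> = (\<Sum>\<gamma>\<in>?S. pact smul \<phi> (G \<gamma>) (pact smul \<phi> (F \<gamma>) (x \<gamma> 1)))"
        by (simp add: cmult_def pact_pmult[OF M E Gp copowerD(2)[OF M E J Fc]])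
      also have "\<dots> = 0"
        using ker_components[OF M E J Fc P] pact_zero_vec[OF M E] by simp
      finally show ?thesis .
    qed
    ultimately show "cmult G F \<in> kerPhi smul \<phi> \<Gamma> x" unfolding kerPhi_def by simp
  qed
  have ideal2: "left_ideal_of (copower \<Gamma>) (kerPhi smul \<phi> \<Gamma> x)"
    using ideal cd unfolding left_ideal_of_def kerPhi_def by blast
  show ?thesis
  proof (intro conjI)
    show "\<forall>F\<in>copower \<Gamma>. \<forall>G\<in>copower \<Gamma>. Phi smul \<phi> x (cadd F G) = Phi smul \<phi> x F + Phi smul \<phi> x G"
      using add by blast
    show "\<forall>h\<in>polys. \<forall>F\<in>copower \<Gamma>. Phi smul \<phi> x (cscal h F) = pact smul \<phi> h (Phi smul \<phi> x F)"
      using scal by blast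
    show "\<forall>m. \<exists>F\<in>copower \<Gamma>. Phi smul \<phi> x F = m" using Phi_surj[OF M E J] by blast
    show "\<forall>F\<in>copower \<Gamma>. \<phi> (Phi smul \<phi> x F) = Phi smul \<phi> x (cscal (pmono 1) F)"
      using scal[OF pmono_polys] pact_pmono[OF M, of \<phi> 1] by simp
  qed (use jac ideal ideal2 in auto)
qed

end
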